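(* Let $g\in\mathscr H$. For every $f\in\mathscr H$ such that $L(f)=g$, one has $\operatorname{val} f\in\{\pi(\operatorname{val} g)\}\cup-\mathcal S(L)$.
   Context: Let $\mathbf K$ be a field and $\ell\geq 2$ an integer. Let $\mathscr H$ be the field of Hahn series $f=\sum_{\gamma\in\mathbb Q}f_\gamma z^\gamma$ with coefficients in $\mathbf K$ and well-ordered support $\operatorname{supp} f=\{\gamma: f_\gamma\neq 0\}$, with $\operatorname{val} f=\min\operatorname{supp} f$ ($\operatorname{val}0=+\infty$). Let $\phi_\ell$ be the automorphism $f(z)\mapsto f(z^\ell)$. Let $L=a_n\phi_\ell^n+\dots+a_0$ with $n\geq1$, $a_i\in\mathbf K[z]$, $a_0a_n\neq0$, acting by $L(f)=\sum_i a_i f(z^{\ell^i})$. Let $\mathcal P(L)=\{(\ell^i,j): 0\le i\le n,\ j\in\operatorname{supp} a_i\}$. The Newton polygon $\mathcal N(L)$ is the convex hull of $\{(\ell^i,j): 0\le i\le n,\ j\geq\operatorname{val} a_i\}\subset\mathbb R^2$; the slopes of its non-vertical edges form the set $\mathcal S(L)$, and $-\mathcal S(L)=\{-\mu:\mu\in\mathcal S(L)\}$. Define $\pi(q)=\max\{(q-j)/\ell^i:(\ell^i,j)\in\mathcal P(L)\}$ for $q\in\mathbb Q$, and $\pi(+\infty)=+\infty$. *)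

theory Defs
  imports "HOL-Analysis.Analysis" "HOL-Computational_Algebra.Polynomial"
begin

text \<open>Hahn series over 'k with rational exponents: f :: rat => 'k, f gamma is the
coefficient of z^gamma; the support must be well-ordered.\<close>

definition hsupp :: "(rat \<Rightarrow> 'k::zero) \<Rightarrow> rat set" where
  "hsupp f = {\<gamma>. f \<gamma> \<noteq> 0}"

definition is_hahn :: "(rat \<Rightarrow> 'k::zero) \<Rightarrow> bool" where
  "is_hahn f \<longleftrightarrow> (\<forall>A. A \<subseteq> hsupp f \<longrightarrow> A \<noteq> {} \<longrightarrow> (\<exists>m\<in>A. \<forall>x\<in>A. m \<le> x))"

text \<open>Valuation; None stands for +infinity (val 0 = +infinity).\<close>
definition hval :: "(rat \<Rightarrow> 'k::zero) \<Rightarrow> rat option" where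
  "hval f = (if hsupp f = {} then None else Some (LEAST \<gamma>. \<gamma> \<in> hsupp f))"

text \<open>Action of L = a_n phi^n + ... + a_0 on a Hahn series:
  L(f) = sum_i a_i(z) f(z^(l^i)); coefficient at gamma of z^j f(z^(l^i)) is f((gamma-j)/l^i).\<close>
definition Lop :: "nat \<Rightarrow> nat \<Rightarrow> (nat \<Rightarrow> 'k::field poly) \<Rightarrow> (rat \<Rightarrow> 'k) \<Rightarrow> (rat \<Rightarrow> 'k)" where
  "Lop l n a f = (\<lambda>\<gamma>. \<Sum>i\<le>n. \<Sum>j\<le>degree (a i).
      coeff (a i) j * f ((\<gamma> - of_nat j) / of_nat (l ^ i)))"

definition PL :: "nat \<Rightarrow> nat \<Rightarrow> (nat \<Rightarrow> 'k::zero poly) \<Rightarrow> (nat \<times> nat) set" where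
  "PL l n a = {(l ^ i, j) | i j. i \<le> n \<and> coeff (a i) j \<noteq> 0}"

definition piL :: "nat \<Rightarrow> nat \<Rightarrow> (nat \<Rightarrow> 'k::zero poly) \<Rightarrow> rat option \<Rightarrow> rat option" where
  "piL l n a q = (case q of None \<Rightarrow> None
     | Some q' \<Rightarrow> Some (Max ((\<lambda>(x, j). (q' - of_nat j) / of_nat x) ` PL l n a)))"

definition newton_polygon :: "nat \<Rightarrow> nat \<Rightarrow> (nat \<Rightarrow> 'k::zero poly) \<Rightarrow> (real \<times> real) set" where
  "newton_polygon l n a = convex hull
     {(real (l ^ i), y) | i y. i \<le> n \<and> (\<exists>j. coeff (a i) j \<noteq> 0 \<and> real j \<le> y)}"

definition newton_slopes :: "nat \<Rightarrow> nat \<Rightarrow> (nat \<Rightarrow> 'k::zero poly) \<Rightarrow> real set" where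
  "newton_slopes l n a = {\<mu>. \<exists>E. E face_of newton_polygon l n a \<and> aff_dim E = 1 \<and>
      (\<exists>p\<in>E. \<exists>q\<in>E. fst p \<noteq> fst q \<and> \<mu> = (snd q - snd p) / (fst q - fst p))}"

end

theory Submission imports Defs begin

lemma slope_lemma:
  fixes a :: "nat \<Rightarrow> 'k::field poly" and v m :: rat
  assumes l: "l \<ge> 2" and i: "i \<le> n" and k: "k \<le> n" and ik: "i \<noteq> k"
    and cj: "coeff (a i) j \<noteq> 0" and cj': "coeff (a k) j' \<noteq> 0"
    and e1: "of_nat j + of_nat (l^i) * v = m" and e2: "of_nat j' + of_nat (l^k) * v = m"
    and low: "\<And>i j. i \<le> n \<Longrightarrow> coeff (a i) j \<noteq> 0 \<Longrightarrow> m \<le> of_nat j + of_nat (l^i) * v"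
  shows "real_of_rat v \<in> uminus ` newton_slopes l n a"
proof -
  define rv where "rv = real_of_rat v"
  define rm where "rm = real_of_rat m"
  define w :: "real \<times> real" where "w = (rv, 1)"
  define P where "P = newton_polygon l n a"
  define E where "E = P \<inter> {x. w \<bullet> x = rm}"
  have re1: "real j + real (l^i) * rv = rm" unfolding rv_def rm_def using e1
    by (metis of_rat_add of_rat_mult of_rat_of_nat_eq)
  have re2: "real j' + real (l^k) * rv = rm" unfolding rv_def rm_def using e2
    by (metis of_rat_add of_rat_mult of_rat_of_nat_eq)
  let ?S = "{(real (l ^ i), y) | i y. i \<le> n \<and> (\<exists>j. coeff (a i) j \<noteq> 0 \<and> real j \<le> y)}"
  have Sge: "?S \<subseteq> {x. w \<bullet> x \<ge> rm}"
  proof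
    fix x assume "x \<in> ?S"
    then obtain i' y j0 where x: "x = (real (l^i'), y)" "i' \<le> n" "coeff (a i') j0 \<noteq> 0" "real j0 \<le> y"
      by blast
    have "m \<le> of_nat j0 + of_nat (l^i') * v" using low x by blast
    then have "rm \<le> real j0 + real (l^i') * rv" unfolding rm_def rv_def
      by (metis of_rat_add of_rat_less_eq of_rat_mult of_rat_of_nat_eq)
    then show "x \<in> {x. w \<bullet> x \<ge> rm}" using x by (simp add: w_def inner_prod_def algebra_simps)
  qed
  have Pge: "P \<subseteq> {x. w \<bullet> x \<ge> rm}" unfolding P_def newton_polygon_def
    using Sge convex_halfspace_ge[of rm w] by (simp add: hull_minimal)
  have face: "E face_of P" unfolding E_def
    by (rule face_of_Int_supporting_hyperplane_ge) (use Pge in \<open>auto simp: P_def newton_polygon_def intro: convex_convex_hull\<close>)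
  define p where "p = (real (l^i), real j)"
  define q where "q = (real (l^k), real j')"
  have pS: "p \<in> ?S" unfolding p_def using i cj by blast
  have qS: "q \<in> ?S" unfolding q_def using k cj' by blast
  have pE: "p \<in> E" unfolding E_def P_def newton_polygon_def
    using hull_subset pS re1 by (force simp: w_def p_def inner_prod_def algebra_simps)
  have qE: "q \<in> E" unfolding E_def P_def newton_polygon_def
    using hull_subset qS re2 by (force simp: w_def q_def inner_prod_def algebra_simps)
  have lne: "l^i \<noteq> l^k" using l ik by (simp add: power_inject_exp)
  then have fne: "fst p \<noteq> fst q" unfolding p_def q_def by (metis fst_conv of_nat_eq_iff)
  then have "p \<noteq> q" by auto
  then have "aff_dim {p,q} = 1" by simp
  moreover have "{p,q} \<subseteq> E" using pE qE by auto
  ultimately have ge: "aff_dim E \<ge> 1" by (metis aff_dim_subset)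
  have "w \<noteq> 0" by (simp add: w_def zero_prod_def)
  then have "aff_dim {x. w \<bullet> x = rm} = 1" by simp
  moreover have "E \<subseteq> {x. w \<bullet> x = rm}" by (auto simp: E_def)
  ultimately have "aff_dim E \<le> 1" by (metis aff_dim_subset)
  with ge have ad: "aff_dim E = 1" by simp
  have sl: "- rv = (snd q - snd p) / (fst q - fst p)"
  proof -
    have "fst q - fst p \<noteq> 0" using fne by simp
    moreover have "snd q - snd p = - rv * (fst q - fst p)" using re1 re2
      by (simp add: p_def q_def algebra_simps)
    ultimately show ?thesis by simp
  qed
  have "- rv \<in> newton_slopes l n a" unfolding newton_slopes_def
    using face ad pE qE fne sl by (auto simp: P_def)
  then show ?thesis unfolding rv_def by (metis image_eqI minus_minus)
qed

theorem mainTheorem4: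
  fixes l n :: nat and a :: "nat \<Rightarrow> 'k::field poly" and f g :: "rat \<Rightarrow> 'k"
  assumes "l \<ge> 2" and "n \<ge> 1" and "a 0 \<noteq> 0" and "a n \<noteq> 0"
    and "is_hahn g" and "is_hahn f" and "Lop l n a f = g"
  shows "hval f = piL l n a (hval g) \<or>
         (\<exists>\<gamma>. hval f = Some \<gamma> \<and> real_of_rat \<gamma> \<in> uminus ` newton_slopes l n a)"
proof (cases "hsupp f = {}")
  case True
  then have f0: "\<And>x. f x = 0" by (auto simp: hsupp_def)
  then have "\<And>x. g x = 0" using assms(7) by (auto simp: Lop_def fun_eq_iff)
  then have "hsupp g = {}" by (auto simp: hsupp_def)
  then show ?thesis using True by (simp add: hval_def piL_def)
next
  case False
  obtain v where v: "v \<in> hsupp f" "\<And>x. x \<in> hsupp f \<Longrightarrow> v \<le> x"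
    using assms(6)[unfolded is_hahn_def, rule_format, of "hsupp f"] False by auto
  have hf: "hval f = Some v" using False v unfolding hval_def
    by (auto intro!: Least_equality)
  have fv: "f v \<noteq> 0" using v(1) by (simp add: hsupp_def)
  have flow: "f x = 0" if "x < v" for x using v(2)[of x] that by (force simp: hsupp_def)
  define T where "T = {(i, j). i \<le> n \<and> coeff (a i) j \<noteq> 0}"
  have Tsub: "T \<subseteq> {..n} \<times> {..Max (degree ` a ` {..n})}"
  proof
    fix x assume "x \<in> T"
    then obtain i j where x: "x = (i,j)" "i \<le> n" "coeff (a i) j \<noteq> 0" by (auto simp: T_def)
    have "j \<le> degree (a i)" using x(3) le_degree by blast
    also have "\<dots> \<le> Max (degree ` a ` {..n})" using x(2) by (intro Max_ge) auto
    finally show "x \<in> {..n} \<times> {..Max (degree ` a ` {..n})}" using x by auto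
  qed
  have Tfin: "finite T" using Tsub by (rule finite_subset) auto
  obtain j00 where "coeff (a 0) j00 \<noteq> 0" using assms(3) by (metis leading_coeff_0_iff)
  then have Tne: "T \<noteq> {}" by (auto simp: T_def)
  define h where "h = (\<lambda>(i::nat, j::nat). of_nat j + of_nat (l^i) * v)"
  define m where "m = Min (h ` T)"
  have mle: "m \<le> h x" if "x \<in> T" for x unfolding m_def using Tfin that by auto
  obtain i0 j0 where ij0: "(i0, j0) \<in> T" "h (i0, j0) = m"
  proof -
    have "m \<in> h ` T" unfolding m_def using Tfin Tne by (intro Min_in) auto
    then show ?thesis using that by auto
  qed
  have low: "\<And>i j. i \<le> n \<Longrightarrow> coeff (a i) j \<noteq> 0 \<Longrightarrow> m \<le> of_nat j + of_nat (l^i) * v"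
    using mle by (auto simp: T_def h_def)
  show ?thesis
  proof (cases "\<exists>p\<in>T. p \<noteq> (i0, j0) \<and> h p = m")
    case True
    then obtain k j' where kj: "(k, j') \<in> T" "(k, j') \<noteq> (i0, j0)" "h (k, j') = m" by auto
    have "k \<noteq> i0" using kj ij0 by (auto simp: h_def)
    then have "real_of_rat v \<in> uminus ` newton_slopes l n a"
      using slope_lemma[of l i0 n k a j0 j' v m] assms(1) kj ij0 low by (auto simp: T_def h_def)
    then show ?thesis using hf by auto
  next
    case False
    have uniq: "m < h p" if "p \<in> T" "p \<noteq> (i0, j0)" for p
      using mle[OF that(1)] False that by (metis order_le_neq_trans)
    have lpos: "(0::rat) < of_nat (l^i)" for i using assms(1) by simp
    have term0: "coeff (a i) j * f ((\<gamma> - of_nat j) / of_nat (l ^ i)) = 0"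
      if "i \<le> n" "\<gamma> < h (i, j)" for i j \<gamma>
    proof (cases "coeff (a i) j = 0")
      case False
      have "(\<gamma> - of_nat j) / of_nat (l ^ i) < v" using that(2) lpos[of i]
        by (simp add: h_def pos_divide_less_eq algebra_simps)
      then show ?thesis using flow by simp
    qed simp
    have gsmall: "g \<gamma> = 0" if "\<gamma> < m" for \<gamma>
    proof -
      have "g \<gamma> = (\<Sum>i\<le>n. \<Sum>j\<le>degree (a i). coeff (a i) j * f ((\<gamma> - of_nat j) / of_nat (l ^ i)))"
        by (subst assms(7)[symmetric]) (simp only: Lop_def)
      also have "\<dots> = 0"
      proof (intro sum.neutral ballI)
        fix i j assume i: "i \<in> {..n}" and j: "j \<in> {..degree (a i)}"
        show "coeff (a i) j * f ((\<gamma> - of_nat j) / of_nat (l ^ i)) = 0"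
        proof (cases "coeff (a i) j = 0")
          case False
          then have "(i,j) \<in> T" using i by (auto simp: T_def)
          then have "\<gamma> < h (i,j)" using mle[of "(i,j)"] that by simp
          then show ?thesis using term0 i by auto
        qed simp
      qed
      finally show ?thesis .
    qed
    have gm: "g m = coeff (a i0) j0 * f v"
    proof -
      have "g m = (\<Sum>i\<le>n. \<Sum>j\<le>degree (a i). coeff (a i) j * f ((m - of_nat j) / of_nat (l ^ i)))"
        by (subst assms(7)[symmetric]) (simp only: Lop_def)
      also have "\<dots> = (\<Sum>j\<le>degree (a i0). coeff (a i0) j * f ((m - of_nat j) / of_nat (l ^ i0)))"
      proof -
        define F where "F = (\<lambda>i. \<Sum>j\<le>degree (a i). coeff (a i) j * f ((m - of_nat j) / of_nat (l ^ i)))"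
        have i0n: "i0 \<in> {..n}" using ij0 by (auto simp: T_def)
        have "sum F {..n} = F i0 + sum F ({..n} - {i0})" by (rule sum.remove[OF finite_atMost i0n])
        moreover have "sum F ({..n} - {i0}) = 0"
        proof (intro sum.neutral ballI)
          fix i assume i: "i \<in> {..n} - {i0}"
          show "F i = 0" unfolding F_def
          proof (intro sum.neutral ballI)
            fix j assume j: "j \<in> {..degree (a i)}"
            show "coeff (a i) j * f ((m - of_nat j) / of_nat (l ^ i)) = 0"
            proof (cases "coeff (a i) j = 0")
              case False
              then have "(i,j) \<in> T" using i by (auto simp: T_def)
              then have "m < h (i,j)" using uniq i by auto
              then show ?thesis using term0 i by auto
            qed simp
          qed
        qed
        ultimately show ?thesis by (simp add: F_def)
      qed
      also have "\<dots> = coeff (a i0) j0 * f ((m - of_nat j0) / of_nat (l ^ i0))"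
      proof -
        define F where "F = (\<lambda>j. coeff (a i0) j * f ((m - of_nat j) / of_nat (l ^ i0)))"
        have j0d: "j0 \<in> {..degree (a i0)}" using ij0 le_degree by (auto simp: T_def)
        have "sum F {..degree (a i0)} = F j0 + sum F ({..degree (a i0)} - {j0})"
          by (rule sum.remove[OF finite_atMost j0d])
        moreover have "sum F ({..degree (a i0)} - {j0}) = 0"
        proof (intro sum.neutral ballI)
          fix j assume j: "j \<in> {..degree (a i0)} - {j0}"
          show "F j = 0" unfolding F_def
          proof (cases "coeff (a i0) j = 0")
            case False
            then have "(i0,j) \<in> T" using ij0 by (auto simp: T_def)
            then have "m < h (i0,j)" using uniq j by auto
            then show "coeff (a i0) j * f ((m - of_nat j) / of_nat (l ^ i0)) = 0"
              using term0 ij0 by (auto simp: T_def)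
          qed simp
        qed
        ultimately show ?thesis by (simp add: F_def)
      qed
      also have "(m - of_nat j0) / of_nat (l ^ i0) = v"
        using ij0(2) lpos[of i0] by (auto simp: h_def field_simps)
      finally show ?thesis .
    qed
    have gm0: "g m \<noteq> 0" using gm fv ij0 by (simp add: T_def)
    have hg: "hval g = Some m"
    proof -
      have "m \<in> hsupp g" using gm0 by (simp add: hsupp_def)
      moreover have "\<And>x. x \<in> hsupp g \<Longrightarrow> m \<le> x" using gsmall
        by (force simp: hsupp_def not_less[symmetric])
      ultimately show ?thesis unfolding hval_def by (auto intro!: Least_equality)
    qed
    have PLeq: "PL l n a = (\<lambda>(i,j). (l^i, j)) ` T" by (auto simp: PL_def T_def)
    have "Max ((\<lambda>(x, j). (m - of_nat j) / of_nat x) ` PL l n a) = v"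
    proof (rule Max_eqI)
      show "finite ((\<lambda>(x, j). (m - of_nat j) / of_nat x) ` PL l n a)" using Tfin PLeq by simp
      show "v \<in> (\<lambda>(x, j). (m - of_nat j) / of_nat x) ` PL l n a"
      proof -
        have ve: "v = (m - of_nat j0) / of_nat (l ^ i0)"
          using ij0(2) lpos[of i0] by (auto simp: h_def field_simps)
        have "(l^i0, j0) \<in> (\<lambda>(i,j). (l^i, j)) ` T" using ij0(1) by force
        then show ?thesis unfolding PLeq ve by force
      qed
    next
      fix y assume "y \<in> (\<lambda>(x, j). (m - of_nat j) / of_nat x) ` PL l n a"
      then obtain i j where ij: "(i,j) \<in> T" "y = (m - of_nat j) / of_nat (l^i)"
        unfolding PLeq by auto
      have "m \<le> h (i,j)" using mle ij by auto
      then show "y \<le> v" using ij(2) lpos[of i]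
        by (simp add: h_def divide_le_eq algebra_simps)
    qed
    then show ?thesis using hf hg by (simp add: piL_def)
  qed
qed
end
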